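(* Let $\tau_1,\tau_2,\dots$ be i.i.d. nonnegative random variables with an absolutely continuous distribution whose support contains $[0,1+\epsilon]$ for some $\epsilon>0$, with cdf $F_\tau$ and pdf $f_\tau$. Let $T_0=0$, $T_k=(\sum_{i=1}^k\tau_i)\wedge1$ for $k\ge1$, $N=\max\{k:T_k<1\}$, $T_{N+1}\equiv1$, and $\Delta^T_k=T_k-T_{k-1}$. Then for any $C>0$, $$\mathbf{E}\Big[\frac{C^N}{1-F_\tau(\Delta^T_{N+1})}\prod_{k=1}^N\frac{1}{f_\tau(\Delta^T_k)(\Delta^T_{k+1})^{1/2}}\Big]<\infty.$$ *)

theory Defs
  imports "HOL-Probability.Probability"
begin

definition rv_support :: "'a measure \<Rightarrow> ('a \<Rightarrow> real) \<Rightarrow> real set" where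
  "rv_support M X = {x. \<forall>e>0. measure M {\<omega> \<in> space M. X \<omega> \<in> ball x e} > 0}"

definition renewal_T :: "(nat \<Rightarrow> 'a \<Rightarrow> real) \<Rightarrow> nat \<Rightarrow> 'a \<Rightarrow> real" where
  "renewal_T \<tau> k \<omega> = min (\<Sum>i=1..k. \<tau> i \<omega>) 1"

definition renewal_N :: "(nat \<Rightarrow> 'a \<Rightarrow> real) \<Rightarrow> 'a \<Rightarrow> nat" where
  "renewal_N \<tau> \<omega> = Max {k. renewal_T \<tau> k \<omega> < 1}"

definition renewal_Delta :: "(nat \<Rightarrow> 'a \<Rightarrow> real) \<Rightarrow> nat \<Rightarrow> 'a \<Rightarrow> real" where
  "renewal_Delta \<tau> k \<omega> = renewal_T \<tau> k \<omega> - renewal_T \<tau> (k - 1) \<omega>"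

end

theory Submission
  imports Defs "HOL-Analysis.Analysis"
begin


lemma beta_nn:
  assumes R: "R > 0" and a: "a > -1"
  shows "(\<integral>\<^sup>+y. indicator {0<..<R} y * ennreal (y powr (-1/2) * (R - y) powr a) \<partial>lborel)
         = ennreal (Beta (1/2) (a+1) * R powr (a + 1/2))"
proof -
  have B: "((\<lambda>t. t powr (-1/2) * (1 - t) powr a) has_integral Beta (1/2) (a+1)) {0..1}"
    using has_integral_Beta_real[of "1/2" "a+1"] a by simp
  have B': "(\<integral>\<^sup>+x. ennreal (indicator {0..1} x * (x powr (-1/2) * (1 - x) powr a)) \<partial>lborel) = ennreal (Beta (1/2) (a+1))"
    by (rule nn_integral_has_integral_lebesgue[OF _ B]) auto
  have eq: "indicator {0<..<R} (R * x) * ennreal ((R*x) powr (-1/2) * (R - R*x) powr a)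
        = ennreal (R powr (a - 1/2)) * ennreal (indicator {0..1} x * (x powr (-1/2) * (1 - x) powr a))" for x
  proof (cases "0 < x \<and> x < 1")
    case True
    then have "(R*x) powr (-1/2) * (R - R*x) powr a = R powr (a - 1/2) * (x powr (-1/2) * (1 - x) powr a)"
    proof -
      have 1: "R - R*x = R * (1 - x)" by (simp add: algebra_simps)
      have 2: "R powr (a - 1/2) = R powr (-1/2) * R powr a"
        by (simp add: powr_add[symmetric])
      show ?thesis using R True unfolding 1 2
        by (simp add: powr_mult)
    qed
    then show ?thesis using True R by (simp add: ennreal_mult' indicator_def)
  next
    case False
    then consider "x \<le> 0" | "x \<ge> 1" "x > 0" by linarith
    then show ?thesis
    proof cases
      case 1 then show ?thesis using R by (auto simp: indicator_def mult_nonneg_nonpos zero_less_mult_iff)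
    next
      case 2 then show ?thesis using R by (auto simp: indicator_def)
    qed
  qed
  have "(\<integral>\<^sup>+y. indicator {0<..<R} y * ennreal (y powr (-1/2) * (R - y) powr a) \<partial>lborel)
     = \<bar>R\<bar> * (\<integral>\<^sup>+x. indicator {0<..<R} (0 + R * x) * ennreal ((0 + R*x) powr (-1/2) * (R - (0 + R*x)) powr a) \<partial>lborel)"
    by (rule nn_integral_real_affine) (use R in auto)
  also have "\<dots> = ennreal R * (ennreal (R powr (a - 1/2)) * ennreal (Beta (1/2) (a+1)))"
    using R by (simp only: add_0_left eq abs_of_pos) (simp add: nn_integral_cmult B'[simplified])
  also have "\<dots> = ennreal (Beta (1/2) (a+1) * R powr (a + 1/2))"
  proof -
    have e: "R powr (a + 1/2) = R powr 1 * R powr (a - 1/2)" by (simp only: powr_add[symmetric]) (simp add: add.commute)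
    show ?thesis using R unfolding e
      by (simp add: ennreal_mult''[symmetric] mult_ac) (simp add: ennreal_mult'[symmetric])
  qed
  finally show ?thesis .
qed

definition Ssum :: "nat \<Rightarrow> (nat \<Rightarrow> real) \<Rightarrow> real" where
  "Ssum m x = (\<Sum>k=1..m. x k)"

definition Gf :: "(real \<Rightarrow> real) \<Rightarrow> nat \<Rightarrow> real \<Rightarrow> real \<Rightarrow> (nat \<Rightarrow> real) \<Rightarrow> ennreal" where
  "Gf f m a r x = (if (\<forall>k\<in>{1..m}. 0 < x k) \<and> Ssum m x < r then
     (\<Prod>k\<in>{1..m}. inverse (ennreal (f (x k)))) *
     ennreal ((\<Prod>k\<in>{1..m}. x k powr (-1/2)) * (r - Ssum m x) powr a) else 0)"

lemma meas_Ssum[measurable]: "Ssum m \<in> borel_measurable (PiM {1..m} (\<lambda>_. borel))"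
  unfolding Ssum_def by measurable

lemma meas_Gf:
  assumes [measurable]: "f \<in> borel_measurable borel"
  shows "Gf f m a r \<in> borel_measurable (PiM {1..m} (\<lambda>_. borel))"
  unfolding Gf_def by measurable

fun Kc :: "nat \<Rightarrow> real \<Rightarrow> real" where
  "Kc 0 a = 1"
| "Kc (Suc m) a = Beta (1/2) (a+1) * Kc m (a + 1/2)"

lemma Beta_pos: "a > 0 \<Longrightarrow> b > 0 \<Longrightarrow> Beta a b > (0::real)"
  by (simp add: Beta_def Gamma_real_pos)

lemma Kc_nonneg: "a > -1 \<Longrightarrow> Kc m a \<ge> 0"
  by (induction m arbitrary: a) (auto intro!: mult_nonneg_nonneg less_imp_le[OF Beta_pos])

lemma prod_upd: "(\<Prod>k\<in>{1..Suc m}. g ((x(Suc m := y)) k)) = (\<Prod>k\<in>{1..m}. g (x k)) * (g y :: 'b :: comm_monoid_mult)"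
proof -
  have "(\<Prod>k\<in>{1..Suc m}. g ((x(Suc m := y)) k)) = g y * (\<Prod>k\<in>{1..m}. g ((x(Suc m := y)) k))"
    by (simp add: atLeastAtMostSuc_conv)
  also have "(\<Prod>k\<in>{1..m}. g ((x(Suc m := y)) k)) = (\<Prod>k\<in>{1..m}. g (x k))"
    by (rule prod.cong) auto
  finally show ?thesis by (simp add: mult.commute)
qed

lemma Ssum_upd: "Ssum (Suc m) (x(Suc m := y)) = Ssum m x + y"
proof -
  have "Ssum (Suc m) (x(Suc m := y)) = y + (\<Sum>k\<in>{1..m}. (x(Suc m := y)) k)"
    by (simp add: Ssum_def atLeastAtMostSuc_conv)
  also have "(\<Sum>k\<in>{1..m}. (x(Suc m := y)) k) = Ssum m x"
    unfolding Ssum_def by (rule sum.cong) auto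
  finally show ?thesis by linarith
qed

lemma ennreal_mult_inverse_le: "ennreal c * inverse (ennreal c) \<le> 1"
  by (cases "c > 0") (auto simp: inverse_ennreal ennreal_mult''[symmetric] ennreal_neg)

lemma Gf_bound:
  fixes f :: "real \<Rightarrow> real"
  assumes fm[measurable]: "f \<in> borel_measurable borel" and fnn: "\<And>x. f x \<ge> 0"
    and Pprob: "prob_space (density lborel f)"
  shows "a > -1 \<Longrightarrow> r > 0 \<Longrightarrow>
    (\<integral>\<^sup>+x. Gf f m a r x \<partial>PiM {1..m} (\<lambda>_. density lborel f)) \<le> ennreal (Kc m a * r powr (a + m/2))"
proof (induction m arbitrary: a)
  case 0
  have "Gf f 0 a r (\<lambda>_. undefined) = ennreal (r powr a)" using 0 by (simp add: Gf_def Ssum_def)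
  then show ?case by (simp add: PiM_empty nn_integral_count_space_finite)
next
  case (Suc m)
  define P where "P = density lborel f"
  have sP: "sets P = sets borel" by (simp add: P_def)
  have ps: "product_sigma_finite (\<lambda>_::nat. P)"
    unfolding product_sigma_finite_def using Pprob prob_space_imp_sigma_finite P_def by auto
  have meas: "Gf f k b r \<in> borel_measurable (PiM {1..k} (\<lambda>_. P))" for k b
    using meas_Gf[OF fm, of k b r] by (subst measurable_cong_sets[OF sets_PiM_cong[OF refl sP] refl]) auto
  have ins: "{1..Suc m} = insert (Suc m) {1..m}" by (auto simp: atLeastAtMostSuc_conv)
  have Bpos: "Beta (1/2) (a+1) > 0" using Suc by (intro Beta_pos) auto
  have inner: "(\<integral>\<^sup>+y. Gf f (Suc m) a r (x(Suc m := y)) \<partial>P) \<le> ennreal (Beta (1/2) (a+1)) * Gf f m (a + 1/2) r x"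
    if x: "x \<in> space (PiM {1..m} (\<lambda>_. P))" for x
  proof -
    have mu: "(\<lambda>y. x(Suc m := y)) \<in> measurable P (PiM {1..Suc m} (\<lambda>_. P))"
      unfolding ins by (rule measurable_component_update[OF x]) auto
    have mg[measurable]: "(\<lambda>y. Gf f (Suc m) a r (x(Suc m := y))) \<in> borel_measurable borel"
      using measurable_comp[OF mu meas] by (simp add: comp_def measurable_cong_sets[OF sP refl])
    have "(\<integral>\<^sup>+y. Gf f (Suc m) a r (x(Suc m := y)) \<partial>P) = (\<integral>\<^sup>+y. ennreal (f y) * Gf f (Suc m) a r (x(Suc m := y)) \<partial>lborel)"
      unfolding P_def by (rule nn_integral_density) auto
    also have "\<dots> \<le> ennreal (Beta (1/2) (a+1)) * Gf f m (a + 1/2) r x"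
    proof (cases "(\<forall>k\<in>{1..m}. 0 < x k) \<and> Ssum m x < r")
      case False
      then have "Gf f (Suc m) a r (x(Suc m := y)) = 0" for y
        unfolding Gf_def Ssum_upd by (auto simp: atLeastAtMostSuc_conv split: if_splits)
      then show ?thesis by simp
    next
      case True
      define R where "R = r - Ssum m x"
      have R: "R > 0" using True R_def by simp
      define Q where "Q = (\<Prod>k\<in>{1..m}. inverse (ennreal (f (x k)))) * ennreal (\<Prod>k\<in>{1..m}. x k powr (-1/2))"
      have pw: "ennreal (f y) * Gf f (Suc m) a r (x(Suc m := y)) \<le>
          Q * (indicator {0<..<R} y * ennreal (y powr (-1/2) * (R - y) powr a))" for y
      proof (cases "0 < y \<and> y < R")
        case True2: True
        have eq: "Gf f (Suc m) a r (x(Suc m := y)) = Q * inverse (ennreal (f y)) * ennreal (y powr (-1/2) * (R - y) powr a)"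
          using True True2 unfolding Gf_def Q_def prod_upd Ssum_upd R_def
          by (auto simp: ennreal_mult'' mult_ac prod_nonneg diff_diff_eq atLeastAtMostSuc_conv)
        have "ennreal (f y) * Gf f (Suc m) a r (x(Suc m := y)) = (ennreal (f y) * inverse (ennreal (f y))) * (Q * ennreal (y powr (-1/2) * (R - y) powr a))"
          unfolding eq by (simp add: mult_ac)
        also have "\<dots> \<le> 1 * (Q * ennreal (y powr (-1/2) * (R - y) powr a))"
          by (rule mult_right_mono) (auto simp: ennreal_mult_inverse_le)
        finally show ?thesis using True2 by simp
      next
        case False
        then have "Gf f (Suc m) a r (x(Suc m := y)) = 0"
          unfolding Gf_def Ssum_upd R_def by (auto simp: atLeastAtMostSuc_conv)
        then show ?thesis by simp
      qed
      have "(\<integral>\<^sup>+y. ennreal (f y) * Gf f (Suc m) a r (x(Suc m := y)) \<partial>lborel)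
          \<le> (\<integral>\<^sup>+y. Q * (indicator {0<..<R} y * ennreal (y powr (-1/2) * (R - y) powr a)) \<partial>lborel)"
        by (rule nn_integral_mono) (rule pw)
      also have "\<dots> = Q * ennreal (Beta (1/2) (a+1) * R powr (a + 1/2))"
        using beta_nn[OF R, of a] Suc by (simp add: nn_integral_cmult)
      also have "\<dots> = ennreal (Beta (1/2) (a+1)) * Gf f m (a + 1/2) r x"
        using True Bpos unfolding Gf_def Q_def R_def
        by (simp add: ennreal_mult'' ennreal_mult' mult_ac prod_nonneg)
      finally show ?thesis .
    qed
    finally show ?thesis .
  qed
  interpret product_sigma_finite "\<lambda>_::nat. P" by (rule ps)
  have "(\<integral>\<^sup>+x. Gf f (Suc m) a r x \<partial>PiM {1..Suc m} (\<lambda>_. P))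
      = (\<integral>\<^sup>+x. (\<integral>\<^sup>+y. Gf f (Suc m) a r (x(Suc m := y)) \<partial>P) \<partial>PiM {1..m} (\<lambda>_. P))"
    unfolding ins by (rule product_nn_integral_insert) (use meas[of "Suc m" a] ins in auto)
  also have "\<dots> \<le> (\<integral>\<^sup>+x. ennreal (Beta (1/2) (a+1)) * Gf f m (a + 1/2) r x \<partial>PiM {1..m} (\<lambda>_. P))"
    by (rule nn_integral_mono) (rule inner)
  also have "\<dots> = ennreal (Beta (1/2) (a+1)) * (\<integral>\<^sup>+x. Gf f m (a + 1/2) r x \<partial>PiM {1..m} (\<lambda>_. P))"
    by (rule nn_integral_cmult) (rule meas)
  also have "\<dots> \<le> ennreal (Beta (1/2) (a+1)) * ennreal (Kc m (a + 1/2) * r powr (a + 1/2 + m/2))"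
    using Suc.IH[of "a + 1/2"] Suc.prems unfolding P_def by (intro mult_left_mono) auto
  also have "\<dots> = ennreal (Kc (Suc m) a * r powr (a + Suc m / 2))"
    using Bpos by (simp add: ennreal_mult'[symmetric] mult_ac add_divide_distrib add.assoc)
  finally show ?case unfolding P_def .
qed

lemma Kc_prod: "Kc n a = (\<Prod>j<n. Beta (1/2) (a + 1 + real j / 2))"
proof (induction n arbitrary: a)
  case 0 then show ?case by simp
next
  case (Suc n)
  show ?case unfolding Kc.simps Suc.IH prod.lessThan_Suc_shift
    by (simp add: algebra_simps add_divide_distrib)
qed

lemma Beta_half_pair: assumes "b > 0" shows "Beta (1/2) b * Beta (1/2) (b + 1/2) = pi / b"
proof -
  have g: "Gamma (b + 1) = b * Gamma b" using Gamma_plus1[of b] assms nonpos_Ints_nonpos[of b] by force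
  have pos: "Gamma b > 0" "Gamma (b + 1/2) > 0" using assms by (auto intro: Gamma_real_pos)
  have "Beta (1/2) b * Beta (1/2) (b + 1/2) = Gamma (1/2)^2 * Gamma b / Gamma (b+1)"
  proof -
    have e1: "1/2 + b = b + 1/2" and e2: "1/2 + (b+1/2) = b+1" by simp_all
    have "Gamma b \<noteq> 0" "Gamma (b + 1/2) \<noteq> 0" using pos by (auto simp del: Gamma_eq_zero_iff)
    then show ?thesis unfolding Beta_def e1 e2 by (simp add: power2_eq_square)
  qed
  also have "\<dots> = pi / b"
  proof -
    have gb: "Gamma b \<noteq> 0" using pos(1) by linarith
    show ?thesis unfolding g Gamma_one_half_real using gb assms by simp
  qed
  finally show ?thesis .
qed

lemma Beta_half_bound: assumes "b > 0" shows "Beta (1/2) (b + 1/2) ^ 2 \<le> pi / b"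
proof -
  have "Beta (1/2) (b + 1/2) \<le> Beta (1/2) b" by (rule Beta_real_mono) (use assms in auto)
  moreover have "Beta (1/2) (b + 1/2) > 0" using assms by (intro Beta_pos) auto
  ultimately have "Beta (1/2) (b + 1/2) ^ 2 \<le> Beta (1/2) b * Beta (1/2) (b + 1/2)"
    by (simp add: power2_eq_square)
  then show ?thesis using Beta_half_pair[OF assms] by simp
qed

lemma summable_CK:
  assumes C: "C > 0"
  shows "summable (\<lambda>n. C ^ n * Kc n (-1/2))"
proof (rule summable_ratio_test[of "1/2" "nat \<lceil>8 * pi * C^2\<rceil> + 1"])
  fix n assume n: "n \<ge> nat \<lceil>8 * pi * C^2\<rceil> + 1"
  have np: "real n > 0" using n by simp
  have nb: "8 * pi * C^2 \<le> real n"
  proof -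
    have "8 * pi * C^2 \<le> of_int \<lceil>8 * pi * C^2\<rceil>" by (rule le_of_int_ceiling)
    also have "\<dots> \<le> real (nat \<lceil>8 * pi * C^2\<rceil>)" by linarith
    also have "\<dots> \<le> real n" using n by linarith
    finally show ?thesis .
  qed
  define B where "B = Beta (1/2) (1/2 + real n / 2)"
  have Bpos: "B > 0" unfolding B_def by (intro Beta_pos) auto
  have "B ^ 2 \<le> pi / (real n / 2)" unfolding B_def using Beta_half_bound[of "real n / 2"] np
    by (simp add: add.commute)
  then have "C^2 * B^2 \<le> C^2 * (pi / (real n / 2))" by (rule mult_left_mono) auto
  then have "(C * B)^2 \<le> C^2 * (2 * pi / real n)" by (simp add: power_mult_distrib mult_ac)
  also have "\<dots> \<le> (1/2)^2"
  proof -
    have e8: "C^2 * (2 * pi) = (8 * pi * C^2) / 4" by algebra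
    have "C^2 * (2 * pi) \<le> real n / 4" using nb unfolding e8 by linarith
    then have "C^2 * (2 * pi) / real n \<le> 1/4" using np by (simp add: divide_le_eq)
    then show ?thesis by (simp add: power2_eq_square)
  qed
  finally have sq: "(C * B)^2 \<le> (1/2)^2" .
  have "C * B \<le> 1/2" by (rule power2_le_imp_le[OF sq]) simp
  moreover have Kn: "Kc n (-1/2) \<ge> 0" unfolding Kc_prod by (intro prod_nonneg) (auto intro: less_imp_le[OF Beta_pos])
  have e14: "-1/2 + 1 + real n / 2 = 1/2 + real n / 2" by algebra
  have KS: "Kc (Suc n) (-1/2) = Kc n (-1/2) * B" unfolding Kc_prod B_def
    by (simp only: prod.lessThan_Suc e14)
  show "norm (C ^ Suc n * Kc (Suc n) (-1/2)) \<le> 1/2 * norm (C ^ n * Kc n (-1/2))"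
  proof -
    have e: "C ^ Suc n * (Kc n (-1/2) * B) = (C^n * Kc n (-1/2)) * (C * B)" by (simp only: power_Suc mult_ac)
    have nn: "C^n * Kc n (-1/2) \<ge> 0" using C Kn by (intro mult_nonneg_nonneg) auto
    have "(C^n * Kc n (-1/2)) * (C * B) \<le> (C^n * Kc n (-1/2)) * (1/2)"
      by (rule mult_left_mono[OF \<open>C * B \<le> 1/2\<close> nn])
    moreover have "C * B \<ge> 0" using C Bpos by (intro mult_nonneg_nonneg) auto
    ultimately show ?thesis unfolding KS e using nn by (simp only: norm_mult real_norm_def abs_of_nonneg) (simp add: mult.commute)
  qed
qed simp



definition Dl :: "nat \<Rightarrow> (nat \<Rightarrow> real) \<Rightarrow> nat \<Rightarrow> real" where
  "Dl n x k = (if k \<le> n then x k else 1 - Ssum n x)"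

definition Hf :: "(real \<Rightarrow> real) \<Rightarrow> (real \<Rightarrow> real) \<Rightarrow> real \<Rightarrow> nat \<Rightarrow> (nat \<Rightarrow> real) \<Rightarrow> ennreal" where
  "Hf f F C n x = (if (\<forall>k\<in>{1..Suc n}. 0 < x k) \<and> Ssum n x < 1 \<and> 1 \<le> Ssum n x + x (Suc n) then
     ennreal C ^ n / ennreal (1 - F (1 - Ssum n x)) *
     (\<Prod>k=1..n. 1 / (ennreal (f (Dl n x k)) * ennreal (sqrt (Dl n x (k + 1))))) else 0)"

lemma meas_Hf:
  assumes [measurable]: "f \<in> borel_measurable borel" "F \<in> borel_measurable borel"
  shows "Hf f F C n \<in> borel_measurable (PiM {1..Suc n} (\<lambda>_. borel))"
proof -
  have [measurable]: "Ssum n \<in> borel_measurable (PiM {1..Suc n} (\<lambda>_. borel))"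
    unfolding Ssum_def by measurable
  have [measurable]: "(\<lambda>x. Dl n x k) \<in> borel_measurable (PiM {1..Suc n} (\<lambda>_. borel))" if "k \<le> Suc n" "k \<ge> 1" for k
  proof (cases "k \<le> n")
    case True
    then have "(\<lambda>x. Dl n x k) = (\<lambda>x. x k)" by (auto simp: Dl_def)
    then show ?thesis using that by simp
  next
    case False
    then have eq: "(\<lambda>x. Dl n x k) = (\<lambda>x. 1 - Ssum n x)" by (auto simp: Dl_def)
    show ?thesis unfolding eq by measurable
  qed
  show ?thesis unfolding Hf_def by measurable
qed

lemma Pi_bound:
  assumes pos: "\<forall>k\<in>{1..n}. 0 < x k" and S: "Ssum n x < 1"
  shows "(\<Prod>k=1..n. 1 / (ennreal (f (Dl n x k)) * ennreal (sqrt (Dl n x (k + 1)))))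
     \<le> (\<Prod>k\<in>{1..n}. inverse (ennreal (f (x k)))) * ennreal ((\<Prod>k\<in>{1..n}. x k powr (-1/2)) * (1 - Ssum n x) powr (-1/2))"
proof -
  define d where "d = 1 - Ssum n x"
  have d: "d > 0" using S d_def by simp
  have Dpos: "Dl n x (k + 1) > 0" if "k \<in> {1..n}" for k
    using pos d that unfolding Dl_def d_def by auto
  have eachk: "1 / (ennreal (f (Dl n x k)) * ennreal (sqrt (Dl n x (k + 1))))
      = inverse (ennreal (f (x k))) * ennreal (Dl n x (k + 1) powr (-1/2))" if k: "k \<in> {1..n}" for k
  proof -
    have e: "Dl n x (k + 1) > 0" using Dpos k by blast
    have "1 / (ennreal (f (Dl n x k)) * ennreal (sqrt (Dl n x (k + 1))))
        = inverse (ennreal (f (x k))) * inverse (ennreal (sqrt (Dl n x (k + 1))))"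
      using k e by (simp add: Dl_def divide_ennreal_def ennreal_inverse_mult')
    also have "inverse (ennreal (sqrt (Dl n x (k + 1)))) = ennreal (Dl n x (k + 1) powr (-1/2))"
      using e by (simp add: inverse_ennreal powr_minus powr_half_sqrt)
    finally show ?thesis .
  qed
  have "(\<Prod>k=1..n. 1 / (ennreal (f (Dl n x k)) * ennreal (sqrt (Dl n x (k + 1)))))
      = (\<Prod>k\<in>{1..n}. inverse (ennreal (f (x k)))) * (\<Prod>k\<in>{1..n}. ennreal (Dl n x (k + 1) powr (-1/2)))"
    by (subst prod.cong[OF refl eachk]) (simp_all add: prod.distrib)
  also have "(\<Prod>k\<in>{1..n}. ennreal (Dl n x (k + 1) powr (-1/2))) = ennreal (\<Prod>k\<in>{1..n}. Dl n x (k + 1) powr (-1/2))"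
    by (rule prod_ennreal) simp
  finally have A: "(\<Prod>k=1..n. 1 / (ennreal (f (Dl n x k)) * ennreal (sqrt (Dl n x (k + 1)))))
      = (\<Prod>k\<in>{1..n}. inverse (ennreal (f (x k)))) * ennreal (\<Prod>k\<in>{1..n}. Dl n x (k + 1) powr (-1/2))" .
  have B: "(\<Prod>k\<in>{1..n}. Dl n x (k + 1) powr (-1/2)) \<le> (\<Prod>k\<in>{1..n}. x k powr (-1/2)) * (1 - Ssum n x) powr (-1/2)"
  proof (cases "n = 0")
    case True then show ?thesis by (simp add: Ssum_def)
  next
    case False
    define g where "g j = Dl n x j powr (-1/2)" for j
    have "(\<Prod>k\<in>{1..n}. Dl n x (k + 1) powr (-1/2)) = (\<Prod>k\<in>{1..n}. g (Suc k))" by (simp add: g_def)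
    also have "\<dots> = (\<Prod>j\<in>{Suc 1..Suc n}. g j)" by (rule prod.shift_bounds_cl_Suc_ivl[symmetric])
    also have "\<dots> = (\<Prod>j\<in>{2..n}. g j) * g (Suc n)"
      using False by (simp add: atLeastAtMostSuc_conv mult.commute numeral_2_eq_2)
    also have "(\<Prod>j\<in>{2..n}. g j) = (\<Prod>j\<in>{2..n}. x j powr (-1/2))"
      by (rule prod.cong) (auto simp: g_def Dl_def)
    also have "g (Suc n) = d powr (-1/2)" by (simp add: g_def Dl_def d_def)
    finally have L: "(\<Prod>k\<in>{1..n}. Dl n x (k + 1) powr (-1/2)) = (\<Prod>j\<in>{2..n}. x j powr (-1/2)) * d powr (-1/2)" .
    have R: "(\<Prod>k\<in>{1..n}. x k powr (-1/2)) = x 1 powr (-1/2) * (\<Prod>j\<in>{2..n}. x j powr (-1/2))"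
      using False by (simp add: prod.atLeast_Suc_atMost numeral_2_eq_2)
    have x1: "x 1 \<le> Ssum n x" unfolding Ssum_def
      by (rule member_le_sum) (use pos False in \<open>force intro: less_imp_le\<close>)+
    have x1p: "x 1 > 0" using pos False by auto
    have ge1: "x 1 powr (-1/2) \<ge> 1"
      using powr_mono2'[of "-1/2" "x 1" 1] x1 x1p S by simp
    have nn: "(\<Prod>j\<in>{2..n}. x j powr (-1/2)) * d powr (-1/2) \<ge> 0" by (simp add: prod_nonneg)
    show ?thesis unfolding L R d_def[symmetric]
      using mult_right_mono[OF ge1 nn] by (simp add: mult_ac)
  qed
  show ?thesis unfolding A by (intro mult_left_mono ennreal_leI B) simp
qed


lemma Ssum_upd_same: "Ssum n (x(Suc n := y)) = Ssum n x"
  unfolding Ssum_def by (rule sum.cong) auto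

lemma Dl_upd_same: "Dl n (x(Suc n := y)) = Dl n x"
  by (rule ext) (auto simp: Dl_def Ssum_upd_same)

lemma term_bound:
  fixes f F :: "real \<Rightarrow> real"
  assumes fm[measurable]: "f \<in> borel_measurable borel" and fnn: "\<And>x. f x \<ge> 0"
    and Fm[measurable]: "F \<in> borel_measurable borel"
    and Pprob: "prob_space (density lborel f)"
    and tail: "\<And>d. 0 < d \<Longrightarrow> d \<le> 1 \<Longrightarrow> emeasure (density lborel f) {d..} = ennreal (1 - F d) \<and> 1 - F d > 0"
    and C: "C > 0"
  shows "(\<integral>\<^sup>+x. Hf f F C n x \<partial>PiM {1..Suc n} (\<lambda>_. density lborel f)) \<le> ennreal (C^n * Kc n (-1/2))"
proof -
  define P where "P = density lborel f"
  have sP: "sets P = sets borel" by (simp add: P_def)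
  have ps: "product_sigma_finite (\<lambda>_::nat. P)"
    unfolding product_sigma_finite_def using Pprob prob_space_imp_sigma_finite P_def by auto
  interpret product_sigma_finite "\<lambda>_::nat. P" by (rule ps)
  have measH: "Hf f F C n \<in> borel_measurable (PiM {1..Suc n} (\<lambda>_. P))"
    using meas_Hf[OF fm Fm, of C n] by (subst measurable_cong_sets[OF sets_PiM_cong[OF refl sP] refl]) auto
  have measG: "Gf f n b r \<in> borel_measurable (PiM {1..n} (\<lambda>_. P))" for b r
    using meas_Gf[OF fm, of n b r] by (subst measurable_cong_sets[OF sets_PiM_cong[OF refl sP] refl]) auto
  have ins: "{1..Suc n} = insert (Suc n) {1..n}" by (auto simp: atLeastAtMostSuc_conv)
  have inner: "(\<integral>\<^sup>+y. Hf f F C n (x(Suc n := y)) \<partial>P) \<le> ennreal (C^n) * Gf f n (-1/2) 1 x" for x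
  proof (cases "(\<forall>k\<in>{1..n}. 0 < x k) \<and> Ssum n x < 1")
    case False
    then have "Hf f F C n (x(Suc n := y)) = 0" for y
      unfolding Hf_def Ssum_upd_same by (auto simp: atLeastAtMostSuc_conv)
    then show ?thesis by simp
  next
    case True
    define d where "d = 1 - Ssum n x"
    have d0: "d > 0" using True d_def by simp
    have Snn: "Ssum n x \<ge> 0" unfolding Ssum_def
      by (rule sum_nonneg) (use True in \<open>force intro: less_imp_le\<close>)
    have d1: "d \<le> 1" using Snn d_def by simp
    define Pi where "Pi = (\<Prod>k=1..n. 1 / (ennreal (f (Dl n x k)) * ennreal (sqrt (Dl n x (k + 1)))))"
    define Phi where "Phi = ennreal C ^ n / ennreal (1 - F d) * Pi"
    have cond: "((\<forall>k\<in>{1..Suc n}. 0 < (x(Suc n := y)) k) \<and> Ssum n x < 1 \<and> 1 \<le> Ssum n x + (x(Suc n := y)) (Suc n))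
        \<longleftrightarrow> d \<le> y" for y
      using True d0 unfolding d_def by (auto simp: atLeastAtMostSuc_conv)
    have eqH: "Hf f F C n (x(Suc n := y)) = Phi * indicator {d..} y" for y
      unfolding Hf_def Ssum_upd_same Dl_upd_same Phi_def Pi_def d_def[symmetric] using cond[of y]
      by (auto simp: indicator_def)
    have "(\<integral>\<^sup>+y. Hf f F C n (x(Suc n := y)) \<partial>P) = Phi * emeasure P {d..}"
      unfolding eqH by (rule nn_integral_cmult_indicator) (simp add: sP)
    also have "\<dots> = Phi * ennreal (1 - F d)" using tail[OF d0 d1] by (simp add: P_def)
    also have "\<dots> = ennreal C ^ n * Pi"
    proof -
      have u: "1 - F d > 0" using tail[OF d0 d1] by simp
      have "ennreal C ^ n / ennreal (1 - F d) * Pi * ennreal (1 - F d) = ennreal C ^ n * Pi * (inverse (ennreal (1 - F d)) * ennreal (1 - F d))"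
        by (simp add: divide_ennreal_def mult_ac)
      also have "inverse (ennreal (1 - F d)) * ennreal (1 - F d) = 1"
        using u by (simp add: inverse_ennreal ennreal_mult''[symmetric])
      finally show ?thesis unfolding Phi_def by simp
    qed
    also have "\<dots> \<le> ennreal C ^ n * ((\<Prod>k\<in>{1..n}. inverse (ennreal (f (x k)))) * ennreal ((\<Prod>k\<in>{1..n}. x k powr (-1/2)) * (1 - Ssum n x) powr (-1/2)))"
      unfolding Pi_def by (intro mult_left_mono Pi_bound) (use True in auto)
    also have "\<dots> = ennreal (C^n) * Gf f n (-1/2) 1 x"
      using True C by (simp add: Gf_def ennreal_power)
    finally show ?thesis .
  qed
  have "(\<integral>\<^sup>+x. Hf f F C n x \<partial>PiM {1..Suc n} (\<lambda>_. P))
      = (\<integral>\<^sup>+x. (\<integral>\<^sup>+y. Hf f F C n (x(Suc n := y)) \<partial>P) \<partial>PiM {1..n} (\<lambda>_. P))"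
    unfolding ins by (rule product_nn_integral_insert) (use measH ins in auto)
  also have "\<dots> \<le> (\<integral>\<^sup>+x. ennreal (C^n) * Gf f n (-1/2) 1 x \<partial>PiM {1..n} (\<lambda>_. P))"
    by (rule nn_integral_mono) (rule inner)
  also have "\<dots> = ennreal (C^n) * (\<integral>\<^sup>+x. Gf f n (-1/2) 1 x \<partial>PiM {1..n} (\<lambda>_. P))"
    by (rule nn_integral_cmult) (rule measG)
  also have "\<dots> \<le> ennreal (C^n) * ennreal (Kc n (-1/2) * 1 powr (-1/2 + n/2))"
    using Gf_bound[OF fm fnn Pprob, of "-1/2" 1 n] unfolding P_def by (intro mult_left_mono) auto
  also have "\<dots> = ennreal (C^n * Kc n (-1/2))"
    using C Kc_nonneg[of "-1/2" n] by (simp add: ennreal_mult'')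
  finally show ?thesis unfolding P_def .
qed



lemma renewal_point:
  fixes \<tau> :: "nat \<Rightarrow> 'a \<Rightarrow> real"
  assumes pos: "\<And>k. k \<ge> 1 \<Longrightarrow> \<tau> k \<omega> > 0" and ex: "\<exists>n. (\<Sum>i=1..n. \<tau> i \<omega>) \<ge> 1"
  obtains n where "renewal_N \<tau> \<omega> = n" "(\<Sum>i=1..n. \<tau> i \<omega>) < 1" "1 \<le> (\<Sum>i=1..Suc n. \<tau> i \<omega>)"
    "\<And>k. k \<in> {1..Suc n} \<Longrightarrow> renewal_Delta \<tau> k \<omega> = (if k \<le> n then \<tau> k \<omega> else 1 - (\<Sum>i=1..n. \<tau> i \<omega>))"
proof -
  define S where "S k = (\<Sum>i=1..k. \<tau> i \<omega>)" for k
  have Smono: "S k \<le> S m" if "k \<le> m" for k m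
    unfolding S_def by (rule sum_mono2) (use that pos in \<open>auto intro: less_imp_le\<close>)
  have Ssuc: "S (Suc k) = S k + \<tau> (Suc k) \<omega>" for k by (simp add: S_def)
  define m where "m = (LEAST m. 1 \<le> S m)"
  have m1: "1 \<le> S m" unfolding m_def using ex LeastI_ex[of "\<lambda>m. 1 \<le> S m"] by (auto simp: S_def)
  have m0: "m \<noteq> 0" using m1 by (cases m) (auto simp: S_def)
  define n where "n = m - 1"
  have mn: "m = Suc n" using m0 n_def by simp
  have "n < m" using mn by simp
  then have "\<not> 1 \<le> S n" unfolding m_def by (rule not_less_Least)
  then have Sn: "S n < 1" by simp
  have SSn: "1 \<le> S (Suc n)" using m1 mn by simp
  have lt: "S k < 1 \<longleftrightarrow> k \<le> n" for k
  proof
    assume "S k < 1" then show "k \<le> n" using Smono[of "Suc n" k] SSn by (cases "k \<le> n") auto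
  next
    assume "k \<le> n" then show "S k < 1" using Smono[of k n] Sn by simp
  qed
  have T: "renewal_T \<tau> k \<omega> = min (S k) 1" for k by (simp add: renewal_T_def S_def)
  have set: "{k. renewal_T \<tau> k \<omega> < 1} = {..n}" unfolding T by (simp add: min_less_iff_disj lt atMost_def)
  have N: "renewal_N \<tau> \<omega> = n" unfolding renewal_N_def set by (rule Max_eqI) auto
  have D: "renewal_Delta \<tau> k \<omega> = (if k \<le> n then \<tau> k \<omega> else 1 - (\<Sum>i=1..n. \<tau> i \<omega>))" if k: "k \<in> {1..Suc n}" for k
  proof (cases "k \<le> n")
    case True
    obtain j where j: "k = Suc j" using k by (cases k) auto
    have "renewal_Delta \<tau> k \<omega> = S k - S j"
      unfolding renewal_Delta_def T using True lt[of k] lt[of j] j by simp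
    then show ?thesis using True j Ssuc by simp
  next
    case False
    then have kk: "k = Suc n" using k by simp
    have "renewal_Delta \<tau> k \<omega> = 1 - S n"
      unfolding renewal_Delta_def T using kk lt[of "Suc n"] lt[of n] by simp
    then show ?thesis using False by (simp add: S_def)
  qed
  show ?thesis
  proof (rule that[OF N])
    show "(\<Sum>i=1..n. \<tau> i \<omega>) < 1" using Sn by (simp add: S_def)
    show "1 \<le> (\<Sum>i=1..Suc n. \<tau> i \<omega>)" using SSn by (simp only: S_def)
  qed (rule D)
qed



theorem lemma10:
  fixes M :: "'a measure" and \<tau> :: "nat \<Rightarrow> 'a \<Rightarrow> real"
    and f :: "real \<Rightarrow> real" and C :: real
  assumes "prob_space M"
    and indep: "prob_space.indep_vars M (\<lambda>_. borel) \<tau> {1..}"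
    and nonneg: "\<And>i \<omega>. i \<ge> 1 \<Longrightarrow> \<omega> \<in> space M \<Longrightarrow> \<tau> i \<omega> \<ge> 0"
    and f_nonneg: "\<And>x. f x \<ge> 0"
    and pdf: "\<And>i. i \<ge> 1 \<Longrightarrow> distributed M lborel (\<tau> i) (\<lambda>x. ennreal (f x))"
    and supp: "\<exists>\<epsilon>>0. {0..1+\<epsilon>} \<subseteq> rv_support M (\<tau> 1)"
    and "C > 0"
  shows "(\<integral>\<^sup>+ \<omega>. ennreal C ^ renewal_N \<tau> \<omega>
            / ennreal (1 - cdf (distr M borel (\<tau> 1)) (renewal_Delta \<tau> (renewal_N \<tau> \<omega> + 1) \<omega>))
            * (\<Prod>k=1..renewal_N \<tau> \<omega>.
                 1 / (ennreal (f (renewal_Delta \<tau> k \<omega>))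
                      * ennreal (sqrt (renewal_Delta \<tau> (k + 1) \<omega>))))
          \<partial>M) < \<infinity>"
proof -
  interpret prob_space M by fact
  note C = \<open>C > 0\<close>
  define P where "P = density lborel (\<lambda>x. ennreal (f x))"
  define \<sigma> where "\<sigma> = (\<lambda>i. if i = 0 then (\<lambda>_::'a. 0::real) else \<tau> i)"
  have \<tau>m: "\<tau> i \<in> borel_measurable M" if "i \<ge> 1" for i
    using distributed_measurable[OF pdf[OF that]] by (simp add: measurable_cong_sets[OF refl sets_lborel])
  have \<sigma>m[measurable]: "\<sigma> i \<in> borel_measurable M" for i
    using \<tau>m[of i] by (cases "i = 0") (auto simp: \<sigma>_def)
  have fm[measurable]: "f \<in> borel_measurable borel"
    using distributed_real_measurable[OF _ pdf[of 1]] f_nonneg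
    by (simp add: measurable_cong_sets[OF sets_lborel refl])
  have distrP: "distr M borel (\<tau> i) = P" if "i \<ge> 1" for i
  proof -
    have "distr M borel (\<tau> i) = distr M lborel (\<tau> i)" by (rule distr_cong) auto
    also have "\<dots> = P" using distributed_distr_eq_density[OF pdf[OF that]] by (simp add: P_def)
    finally show ?thesis .
  qed
  have distr\<sigma>: "distr M borel (\<sigma> i) = P" if "i \<ge> 1" for i
    using distrP[OF that] that by (simp add: \<sigma>_def)
  have Pprob: "prob_space P" using prob_space_distr[OF \<tau>m[of 1]] distrP[of 1] by simp
  interpret Pp: prob_space P by (rule Pprob)
  have sP: "sets P = sets borel" by (simp add: P_def)
  interpret Pb: finite_borel_measure P
    by unfold_locales (rule sP)
  define F where "F = cdf P"
  have cdfeq: "cdf (distr M borel (\<tau> 1)) = F" using distrP[of 1] by (simp add: F_def)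
  have Fm[measurable]: "F \<in> borel_measurable borel"
    by (rule borel_measurable_mono) (auto simp: F_def mono_def intro: Pb.cdf_nondecreasing)
  have Ppt: "measure P {t} = 0" for t
  proof -
    have "emeasure P {t} = ennreal (f t) * emeasure lborel {t}"
      unfolding P_def by (subst emeasure_density) (auto simp: mult.commute)
    then show ?thesis by (simp add: measure_def)
  qed
  have measM: "measure M {\<omega>\<in>space M. \<tau> i \<omega> \<in> A} = measure P A" if "i \<ge> 1" "A \<in> sets borel" for i A
  proof -
    have "measure P A = measure M (\<tau> i -` A \<inter> space M)"
      using distrP[OF that(1)] measure_distr[OF \<tau>m[OF that(1)] that(2)] by simp
    then show ?thesis by (simp add: vimage_def Int_def conj_commute)
  qed
  obtain \<epsilon> where \<epsilon>: "\<epsilon> > 0" "{0..1+\<epsilon>} \<subseteq> rv_support M (\<tau> 1)" using supp by blast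
  have "1 + \<epsilon>/2 \<in> rv_support M (\<tau> 1)" using \<epsilon> by (intro subsetD[OF \<epsilon>(2)]) auto
  then have H: "\<forall>e>0. measure M {\<omega>\<in>space M. \<tau> 1 \<omega> \<in> ball (1 + \<epsilon>/2) e} > 0"
    unfolding rv_support_def by (simp only: mem_Collect_eq)
  have ball: "measure M {\<omega>\<in>space M. \<tau> 1 \<omega> \<in> ball (1 + \<epsilon>/2) (\<epsilon>/2)} > 0"
    using H \<epsilon>(1) half_gt_zero by blast
  have "measure M {\<omega>\<in>space M. \<tau> 1 \<omega> \<in> ball (1 + \<epsilon>/2) (\<epsilon>/2)} \<le> measure M {\<omega>\<in>space M. \<tau> 1 \<omega> \<in> {1<..}}"
    using \<tau>m[of 1] by (intro finite_measure_mono) (auto simp: dist_real_def abs_if split: if_splits)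
  then have q: "measure P {1<..} > 0" using ball measM[of 1 "{1<..}"] by simp
  have F1: "F 1 < 1"
  proof -
    have "measure P (space P - {1<..}) = 1 - measure P {1<..}" by (rule Pp.prob_compl) (simp add: sP)
    moreover have "space P - {1<..} = {..1}" by (auto simp: P_def)
    ultimately show ?thesis using q by (simp add: F_def cdf_def)
  qed
  have tail: "emeasure P {d..} = ennreal (1 - F d) \<and> 1 - F d > 0" if "0 < d" "d \<le> 1" for d
  proof
    have "measure P (space P - {..d}) = 1 - measure P {..d}" by (rule Pp.prob_compl) (simp add: sP)
    moreover have "space P - {..d} = {d<..}" by (auto simp: P_def)
    ultimately have a: "measure P {d<..} = 1 - F d" by (simp add: F_def cdf_def)
    have U: "{d..} = {d} \<union> {d<..}" by auto
    have "measure P {d..} = measure P {d} + measure P {d<..}"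
      unfolding U by (rule Pp.finite_measure_Union) (auto simp: sP)
    then have "measure P {d..} = 1 - F d" using a Ppt by simp
    then show "emeasure P {d..} = ennreal (1 - F d)" by (simp add: Pp.emeasure_eq_measure)
    show "1 - F d > 0" using F1 Pb.cdf_nondecreasing[OF that(2)] by (simp add: F_def)
  qed
  have indep\<sigma>: "indep_vars (\<lambda>_. borel) \<sigma> {1..}"
    using indep by (subst indep_vars_cong[of _ "{1..}" _ \<tau>]) (auto simp: \<sigma>_def)
  have AE1: "AE \<omega> in M. \<forall>k. k \<ge> 1 \<longrightarrow> \<tau> k \<omega> > 0"
  proof (subst AE_all_countable, intro allI)
    fix k :: nat
    show "AE \<omega> in M. k \<ge> 1 \<longrightarrow> \<tau> k \<omega> > 0"
    proof (cases "k \<ge> 1")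
      case False then show ?thesis by simp
    next
      case True
      have "emeasure M {\<omega>\<in>space M. \<tau> k \<omega> \<in> {0}} = 0"
        using measM[OF True, of "{0}"] Ppt[of 0] by (simp add: emeasure_eq_measure)
      then have "AE \<omega> in M. \<tau> k \<omega> \<noteq> 0"
        by (subst AE_iff_measurable[OF _ refl]) (use \<tau>m[OF True] in auto)
      then show ?thesis
        using AE_space by eventually_elim (use nonneg True in \<open>auto simp: less_le\<close>)
    qed
  qed
  have AE2: "AE \<omega> in M. \<exists>n. (\<Sum>i=1..n. \<tau> i \<omega>) \<ge> 1"
  proof -
    have sum\<sigma>: "(\<Sum>i=1..n. \<sigma> i \<omega>) = (\<Sum>i=1..n. \<tau> i \<omega>)" for n \<omega>
      by (rule sum.cong) (auto simp: \<sigma>_def)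
    define Z where "Z = {\<omega>\<in>space M. \<forall>n. (\<Sum>i=1..n. \<sigma> i \<omega>) < 1}"
    have Zs: "Z \<in> sets M" unfolding Z_def by measurable
    define p where "p = measure P {..<1}"
    have p0: "p \<ge> 0" by (simp add: p_def)
    have p1: "p < 1"
    proof -
      have "p \<le> measure P {..1}" unfolding p_def by (rule Pp.finite_measure_mono) (auto simp: sP)
      then show ?thesis using F1 by (simp add: F_def cdf_def)
    qed
    have Zb: "measure M Z \<le> p ^ n" if n: "n \<ge> 1" for n
    proof -
      have "Z \<subseteq> (\<Inter>i\<in>{1..n}. \<sigma> i -` {..<1} \<inter> space M)"
      proof
        fix \<omega> assume \<omega>: "\<omega> \<in> Z"
        show "\<omega> \<in> (\<Inter>i\<in>{1..n}. \<sigma> i -` {..<1} \<inter> space M)"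
        proof
          fix i assume i: "i \<in> {1..n}"
          have "\<sigma> i \<omega> \<le> (\<Sum>i=1..n. \<sigma> i \<omega>)"
            by (rule member_le_sum) (use i \<omega> nonneg in \<open>auto simp: Z_def \<sigma>_def\<close>)
          moreover have "(\<Sum>i=1..n. \<sigma> i \<omega>) < 1" "\<omega> \<in> space M" using \<omega> unfolding Z_def by auto
          ultimately show "\<omega> \<in> \<sigma> i -` {..<1} \<inter> space M" by auto
        qed
      qed
      then have "measure M Z \<le> measure M (\<Inter>i\<in>{1..n}. \<sigma> i -` {..<1} \<inter> space M)"
        by (intro finite_measure_mono) (use n in \<open>auto intro!: sets.finite_INT\<close>)
      also have "\<dots> = (\<Prod>i\<in>{1..n}. measure M (\<sigma> i -` {..<1} \<inter> space M))"
        by (rule indep_varsD[OF indep\<sigma>]) (use n in auto)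
      also have "\<dots> = (\<Prod>i\<in>{1..n}. p)"
      proof (rule prod.cong[OF refl])
        fix i assume i: "i \<in> {1..n}"
        show "measure M (\<sigma> i -` {..<1} \<inter> space M) = p"
          using measure_distr[OF \<sigma>m[of i], of "{..<1}"] distr\<sigma>[of i] i by (simp add: p_def)
      qed
      finally show ?thesis by simp
    qed
    have "measure M Z \<le> 0"
    proof (rule LIMSEQ_le_const)
      show "(\<lambda>n. p ^ n) \<longlonglongrightarrow> 0" using p0 p1 by (intro LIMSEQ_power_zero) simp
      show "\<exists>N. \<forall>n\<ge>N. measure M Z \<le> p ^ n" using Zb by blast
    qed
    then have "emeasure M Z = 0" by (simp add: emeasure_eq_measure measure_le_0_iff)
    then have "Z \<in> null_sets M" using Zs by auto
    then have "AE \<omega> in M. \<omega> \<notin> Z" by (rule AE_I') auto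
    then show ?thesis
      using AE_space by eventually_elim (auto simp: Z_def not_less sum\<sigma>[simplified])
  qed
  define X where "X n = (\<lambda>\<omega>. \<lambda>i\<in>{1..Suc n}. \<sigma> i \<omega>)" for n
  have Xm: "X n \<in> measurable M (PiM {1..Suc n} (\<lambda>_. borel))" for n unfolding X_def by measurable
  define G where "G \<omega> = ennreal C ^ renewal_N \<tau> \<omega>
            / ennreal (1 - cdf (distr M borel (\<tau> 1)) (renewal_Delta \<tau> (renewal_N \<tau> \<omega> + 1) \<omega>))
            * (\<Prod>k=1..renewal_N \<tau> \<omega>.
                 1 / (ennreal (f (renewal_Delta \<tau> k \<omega>))
                      * ennreal (sqrt (renewal_Delta \<tau> (k + 1) \<omega>))))" for \<omega>
  have pw: "AE \<omega> in M. G \<omega> \<le> (\<Sum>n. Hf f F C n (X n \<omega>))"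
    using AE1 AE2
  proof eventually_elim
    case (elim \<omega>)
    then have pos: "\<And>k. k \<ge> 1 \<Longrightarrow> \<tau> k \<omega> > 0" and ex: "\<exists>n. (\<Sum>i=1..n. \<tau> i \<omega>) \<ge> 1" by auto
    obtain n where N: "renewal_N \<tau> \<omega> = n" and Sn: "(\<Sum>i=1..n. \<tau> i \<omega>) < 1"
      and SSn: "1 \<le> (\<Sum>i=1..Suc n. \<tau> i \<omega>)"
      and D: "\<And>k. k \<in> {1..Suc n} \<Longrightarrow> renewal_Delta \<tau> k \<omega> = (if k \<le> n then \<tau> k \<omega> else 1 - (\<Sum>i=1..n. \<tau> i \<omega>))"
      using renewal_point[of \<tau> \<omega>, OF pos ex] by metis
    have Xk: "X n \<omega> k = \<tau> k \<omega>" if "k \<in> {1..Suc n}" for k using that by (auto simp: X_def \<sigma>_def)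
    have SX: "Ssum n (X n \<omega>) = (\<Sum>i=1..n. \<tau> i \<omega>)" unfolding Ssum_def by (rule sum.cong) (auto simp: Xk)
    have SSX: "Ssum n (X n \<omega>) + X n \<omega> (Suc n) = (\<Sum>i=1..Suc n. \<tau> i \<omega>)" using SX Xk[of "Suc n"] by simp
    have DX: "Dl n (X n \<omega>) k = renewal_Delta \<tau> k \<omega>" if "k \<in> {1..Suc n}" for k
      using that D[OF that] Xk[OF that] SX by (simp add: Dl_def)
    have condX: "(\<forall>k\<in>{1..Suc n}. 0 < X n \<omega> k) \<and> Ssum n (X n \<omega>) < 1 \<and> 1 \<le> Ssum n (X n \<omega>) + X n \<omega> (Suc n)"
      using Xk pos SX SSX Sn SSn by auto
    have "G \<omega> = Hf f F C n (X n \<omega>)"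
    proof -
      have pr: "(\<Prod>k=1..n. 1 / (ennreal (f (renewal_Delta \<tau> k \<omega>)) * ennreal (sqrt (renewal_Delta \<tau> (k + 1) \<omega>))))
          = (\<Prod>k=1..n. 1 / (ennreal (f (Dl n (X n \<omega>) k)) * ennreal (sqrt (Dl n (X n \<omega>) (k + 1)))))"
        by (rule prod.cong) (auto simp: DX)
      have last: "renewal_Delta \<tau> (n + 1) \<omega> = 1 - Ssum n (X n \<omega>)" using D[of "Suc n"] SX by simp
      show ?thesis unfolding G_def Hf_def N cdfeq pr last using condX by simp
    qed
    also have "\<dots> \<le> (\<Sum>n. Hf f F C n (X n \<omega>))"
      using sum_le_suminf[OF summableI, of "{n}" "\<lambda>n. Hf f F C n (X n \<omega>)"] by simp
    finally show ?case .
  qed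
  have termeq: "(\<integral>\<^sup>+\<omega>. Hf f F C n (X n \<omega>) \<partial>M) = (\<integral>\<^sup>+x. Hf f F C n x \<partial>PiM {1..Suc n} (\<lambda>_. P))" for n
  proof -
    have iv: "indep_vars (\<lambda>_. borel) \<sigma> {1..Suc n}" by (rule indep_vars_subset[OF indep\<sigma>]) auto
    have "distr M (PiM {1..Suc n} (\<lambda>_. borel)) (X n) = PiM {1..Suc n} (\<lambda>i. distr M borel (\<sigma> i))"
      using iv unfolding X_def by (subst (asm) indep_vars_iff_distr_eq_PiM) auto
    also have "\<dots> = PiM {1..Suc n} (\<lambda>_. P)" by (rule PiM_cong) (auto simp: distr\<sigma>)
    finally have dd: "distr M (PiM {1..Suc n} (\<lambda>_. borel)) (X n) = PiM {1..Suc n} (\<lambda>_. P)" .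
    have mH: "Hf f F C n \<in> borel_measurable (distr M (PiM {1..Suc n} (\<lambda>_. borel)) (X n))"
      using meas_Hf[OF fm Fm, of C n] by (simp add: measurable_cong_sets[OF sets_distr refl])
    show ?thesis using nn_integral_distr[OF Xm mH] dd by simp
  qed
  have "(\<integral>\<^sup>+\<omega>. G \<omega> \<partial>M) \<le> (\<integral>\<^sup>+\<omega>. (\<Sum>n. Hf f F C n (X n \<omega>)) \<partial>M)"
    by (rule nn_integral_mono_AE[OF pw])
  also have "\<dots> = (\<Sum>n. (\<integral>\<^sup>+\<omega>. Hf f F C n (X n \<omega>) \<partial>M))"
  proof (rule nn_integral_suminf)
    fix n
    show "(\<lambda>\<omega>. Hf f F C n (X n \<omega>)) \<in> borel_measurable M"
      using measurable_comp[OF Xm meas_Hf[OF fm Fm, of C n]] by (simp add: comp_def)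
  qed
  also have "\<dots> \<le> (\<Sum>n. ennreal (C^n * Kc n (-1/2)))"
  proof (intro suminf_le summableI)
    fix n
    show "(\<integral>\<^sup>+\<omega>. Hf f F C n (X n \<omega>) \<partial>M) \<le> ennreal (C^n * Kc n (-1/2))"
      unfolding termeq P_def
      by (rule term_bound[OF fm f_nonneg Fm]) (use Pprob tail C in \<open>auto simp: P_def\<close>)
  qed
  also have "\<dots> = ennreal (\<Sum>n. C^n * Kc n (-1/2))"
    by (rule suminf_ennreal2) (use C Kc_nonneg[of "-1/2"] summable_CK[OF C] in auto)
  also have "\<dots> < \<infinity>" by simp
  finally show ?thesis unfolding G_def .
qed

end
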